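(* If $r\ge 2$, then the glued binary tree $GT(r)$ satisfies $\mu_{\rm t}(GT(r))=\mu_{\rm d}(GT(r))=2^{r-1}$, and the number of $\mu_{\rm t}$-sets and the number of $\mu_{\rm d}$-sets of $GT(r)$ are both equal to $2^{2^{r-1}}$.
   Context: A perfect binary tree of depth $r\ge1$ is a rooted tree in which every non-leaf vertex has exactly $2$ children and all leaves have depth $r$. The glued binary tree $GT(r)$ is obtained from two copies of the perfect binary tree of depth $r$ by pairwise identifying their leaves (via a fixed isomorphism of the copies). For $S\subseteq V(G)$, two vertices $u,v$ are $S$-visible if there exists a shortest $u,v$-path $P$ with $V(P)\cap S\subseteq\{u,v\}$; $S$ is a mutual-visibility set if every two vertices of $S$ are $S$-visible. $S$ is a dual mutual-visibility set if it is a mutual-visibility set and every pair $u,v\in V(G)\setminus S$ is $S$-visible. $S$ is a total mutual-visibility set if every pair of vertices of $G$ is $S$-visible. Largest dual (resp. total) mutual-visibility sets are $\mu_{\rm d}$-sets (resp. $\mu_{\rm t}$-sets), and their sizes are $\mu_{\rm d}(G)$ (resp. $\mu_{\rm t}(G)$). *)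

theory Defs
  imports Main
begin

definition is_walk :: "'a set \<Rightarrow> ('a \<Rightarrow> 'a \<Rightarrow> bool) \<Rightarrow> 'a list \<Rightarrow> 'a \<Rightarrow> 'a \<Rightarrow> bool" where
  "is_walk V E p u v \<longleftrightarrow> p \<noteq> [] \<and> hd p = u \<and> last p = v \<and> set p \<subseteq> V \<and>
     (\<forall>i. Suc i < length p \<longrightarrow> E (p ! i) (p ! Suc i))"

definition gdist :: "'a set \<Rightarrow> ('a \<Rightarrow> 'a \<Rightarrow> bool) \<Rightarrow> 'a \<Rightarrow> 'a \<Rightarrow> nat" where
  "gdist V E u v = (LEAST n. \<exists>p. is_walk V E p u v \<and> length p = Suc n)"

definition is_shortest_path :: "'a set \<Rightarrow> ('a \<Rightarrow> 'a \<Rightarrow> bool) \<Rightarrow> 'a list \<Rightarrow> 'a \<Rightarrow> 'a \<Rightarrow> bool" where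
  "is_shortest_path V E p u v \<longleftrightarrow> is_walk V E p u v \<and> length p = Suc (gdist V E u v)"

definition S_visible :: "'a set \<Rightarrow> ('a \<Rightarrow> 'a \<Rightarrow> bool) \<Rightarrow> 'a set \<Rightarrow> 'a \<Rightarrow> 'a \<Rightarrow> bool" where
  "S_visible V E S u v \<longleftrightarrow> (\<exists>p. is_shortest_path V E p u v \<and> set p \<inter> S \<subseteq> {u, v})"

definition mutual_visibility_set :: "'a set \<Rightarrow> ('a \<Rightarrow> 'a \<Rightarrow> bool) \<Rightarrow> 'a set \<Rightarrow> bool" where
  "mutual_visibility_set V E S \<longleftrightarrow> S \<subseteq> V \<and> (\<forall>u\<in>S. \<forall>v\<in>S. S_visible V E S u v)"

definition dual_mutual_visibility_set :: "'a set \<Rightarrow> ('a \<Rightarrow> 'a \<Rightarrow> bool) \<Rightarrow> 'a set \<Rightarrow> bool" where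
  "dual_mutual_visibility_set V E S \<longleftrightarrow> mutual_visibility_set V E S \<and>
     (\<forall>u\<in>V - S. \<forall>v\<in>V - S. S_visible V E S u v)"

definition total_mutual_visibility_set :: "'a set \<Rightarrow> ('a \<Rightarrow> 'a \<Rightarrow> bool) \<Rightarrow> 'a set \<Rightarrow> bool" where
  "total_mutual_visibility_set V E S \<longleftrightarrow> S \<subseteq> V \<and> (\<forall>u\<in>V. \<forall>v\<in>V. S_visible V E S u v)"

definition mu_d :: "'a set \<Rightarrow> ('a \<Rightarrow> 'a \<Rightarrow> bool) \<Rightarrow> nat" where
  "mu_d V E = Max {card S | S. dual_mutual_visibility_set V E S}"

definition mu_t :: "'a set \<Rightarrow> ('a \<Rightarrow> 'a \<Rightarrow> bool) \<Rightarrow> nat" where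
  "mu_t V E = Max {card S | S. total_mutual_visibility_set V E S}"

definition mu_d_sets :: "'a set \<Rightarrow> ('a \<Rightarrow> 'a \<Rightarrow> bool) \<Rightarrow> 'a set set" where
  "mu_d_sets V E = {S. dual_mutual_visibility_set V E S \<and> card S = mu_d V E}"

definition mu_t_sets :: "'a set \<Rightarrow> ('a \<Rightarrow> 'a \<Rightarrow> bool) \<Rightarrow> 'a set set" where
  "mu_t_sets V E = {S. total_mutual_visibility_set V E S \<and> card S = mu_t V E}"

text \<open>A vertex of the perfect binary tree of depth r is a bool list of length \<le> r
  (the path from the root). A vertex of GT(r) is a pair (copy, word); leaves
  (length r) are identified between the copies, canonically represented with copy False.\<close>

definition gt_norm :: "nat \<Rightarrow> bool \<Rightarrow> bool list \<Rightarrow> bool \<times> bool list" where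
  "gt_norm r c w = ((if length w = r then False else c), w)"

definition GT_V :: "nat \<Rightarrow> (bool \<times> bool list) set" where
  "GT_V r = {(c, w). length w < r} \<union> {(False, w) | w. length w = r}"

definition GT_E :: "nat \<Rightarrow> bool \<times> bool list \<Rightarrow> bool \<times> bool list \<Rightarrow> bool" where
  "GT_E r u v \<longleftrightarrow> (\<exists>c w x. length w < r \<and>
     ((u = gt_norm r c w \<and> v = gt_norm r c (w @ [x])) \<or>
      (v = gt_norm r c w \<and> u = gt_norm r c (w @ [x]))))"

end

theory Submission imports Defs "HOL-Library.FuncSet" begin

definition D :: "nat \<Rightarrow> bool \<times> bool list \<Rightarrow> bool \<times> bool list \<Rightarrow> bool" where
  "D r u v \<longleftrightarrow> length (snd u) < r \<and> (\<exists>x. snd v = snd u @ [x]) \<and>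
     fst v = (if length (snd v) = r then False else fst u)"

lemma D_gt: "D r u v \<longleftrightarrow> (\<exists>c w x. length w < r \<and> u = gt_norm r c w \<and> v = gt_norm r c (w @ [x]))"
proof
  assume "D r u v"
  then show "\<exists>c w x. length w < r \<and> u = gt_norm r c w \<and> v = gt_norm r c (w @ [x])"
    unfolding D_def gt_norm_def by (cases u; cases v) auto
next
  assume "\<exists>c w x. length w < r \<and> u = gt_norm r c w \<and> v = gt_norm r c (w @ [x])"
  then show "D r u v" unfolding D_def gt_norm_def by auto
qed

lemma E_iff: "GT_E r u v \<longleftrightarrow> D r u v \<or> D r v u"
  unfolding GT_E_def D_gt by blast
lemma E_sym: "GT_E r u v \<Longrightarrow> GT_E r v u"
  unfolding E_iff by blast

lemma E_irrefl: "\<not> GT_E r u u"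
  unfolding E_iff D_def by auto

lemma D_pair: "D r (c,w) (c',w') \<longleftrightarrow> length w < r \<and> (\<exists>x. w' = w @ [x]) \<and> c' = (if length w' = r then False else c)"
  unfolding D_def by simp

lemma E_pair: "GT_E r (c,w) (c',w') \<longleftrightarrow>
   (length w < r \<and> (\<exists>x. w' = w @ [x]) \<and> ((length w' = r \<and> c' = False) \<or> (length w' < r \<and> c' = c))) \<or>
   (length w' < r \<and> (\<exists>x. w = w' @ [x]) \<and> ((length w = r \<and> c = False) \<or> (length w < r \<and> c = c')))"
  unfolding E_iff D_pair by (auto split: if_split_asm)
lemma E_len: "GT_E r (c,w) (c',w') \<Longrightarrow> length w' = Suc (length w) \<or> length w = Suc (length w')"
  unfolding E_pair by auto

lemma E_pre: "GT_E r (c,w) (c',w') \<Longrightarrow> length w' = Suc (length w) \<Longrightarrow> w = butlast w'"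
  unfolding E_pair by auto

lemma E_pre': "GT_E r (c,w) (c',w') \<Longrightarrow> length w = Suc (length w') \<Longrightarrow> w' = butlast w"
  using E_pre E_sym by blast

lemma E_le: "GT_E r (c,w) (c',w') \<Longrightarrow> length w \<le> r \<and> length w' \<le> r"
  unfolding E_pair by auto

lemma E_copy: "GT_E r (c,w) (c',w') \<Longrightarrow> length w < r \<Longrightarrow> length w' < r \<Longrightarrow> c' = c"
  unfolding E_pair by auto

lemma E_leaf: "GT_E r (c,w) (c',w') \<Longrightarrow> length w = r \<Longrightarrow> c = False"
  unfolding E_pair by auto

lemma E_down: "length w < r \<Longrightarrow> length w + 1 < r \<Longrightarrow> GT_E r (c,w) (c, w @ [x])"
  unfolding E_pair by auto

lemma E_down_leaf: "length w + 1 = r \<Longrightarrow> GT_E r (c,w) (False, w @ [x])"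
  unfolding E_pair by auto
lemma nbr_a:
  assumes "length v + 2 = r" "GT_E r (c, v) z" "GT_E r z (False, v @ [y, t])"
  shows "z = (c, v @ [y])"
proof -
  obtain c' u where z: "z = (c',u)" by (cases z)
  have e1: "GT_E r (c,v) (c',u)" using assms z by simp
  have e2: "GT_E r (c',u) (False, v@[y,t])" using assms z by simp
  have l: "length u = Suc (length v)" using E_len[OF e1] E_len[OF e2] by (simp; arith)
  have u: "u = v @ [y]" using E_pre[OF e2] l by (simp add: butlast_append)
  have "c' = c" using E_copy[OF e1] l assms by simp
  then show ?thesis using z u by simp
qed
lemma nbr_b:
  assumes "length w + 1 = r" "GT_E r (False, w @ [x]) z" "GT_E r z (False, w @ [y])"
  shows "z = (False, w) \<or> z = (True, w)"
proof -
  obtain c' u where z: "z = (c',u)" by (cases z)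
  have e1: "GT_E r (False, w @ [x]) (c',u)" using assms z by simp
  have e2: "GT_E r (c',u) (False, w @ [y])" using assms z by simp
  have l: "length u = length w" using E_len[OF e1] E_len[OF e2] E_le[OF e1] assms by auto
  have u: "u = w" using E_pre'[OF e1] l by simp
  show ?thesis using z u by (cases c') auto
qed
lemma nbr_c:
  assumes "length v + 1 < r" "y \<noteq> y'" "GT_E r (c, v @ [y]) z" "GT_E r z (c, v @ [y'])"
  shows "z = (c, v)"
proof -
  obtain c' u where z: "z = (c',u)" by (cases z)
  have e1: "GT_E r (c, v @ [y]) (c',u)" using assms z by simp
  have e2: "GT_E r (c',u) (c, v @ [y'])" using assms z by simp
  have l: "length u = length v"
  proof (rule ccontr)
    assume "length u \<noteq> length v"
    then have l2: "length u = Suc (Suc (length v))" using E_len[OF e1] E_len[OF e2] by auto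
    have "v @ [y] = butlast u" using E_pre[OF e1] l2 by simp
    moreover have "v @ [y'] = butlast u" using E_pre'[OF e2] l2 by simp
    ultimately show False using assms(2) by (metis append1_eq_conv)
  qed
  have u: "u = v" using E_pre'[OF e1] l by simp
  have "c' = c" using E_copy[OF e1] l assms by simp
  then show ?thesis using z u by simp
qed
lemma nbr_d:
  assumes "length w + 1 = r" "GT_E r (False, w) z" "GT_E r z (True, w)"
  shows "z = (False, w @ [False]) \<or> z = (False, w @ [True])"
proof -
  obtain c' u where z: "z = (c',u)" by (cases z)
  have e1: "GT_E r (False, w) (c',u)" using assms z by simp
  have e2: "GT_E r (c',u) (True, w)" using assms z by simp
  have l: "length u = Suc (length w)"
  proof (rule ccontr)
    assume "length u \<noteq> Suc (length w)"
    then have l2: "Suc (length u) = length w" using E_len[OF e1] by auto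
    have "c' = False" using E_copy[OF e1] l2 assms by simp
    moreover have "True = c'" using E_copy[OF e2] l2 assms by simp
    ultimately show False by simp
  qed
  have c: "c' = False" using E_leaf[OF E_sym[OF e1]] l assms by simp
  have "w = butlast u" using E_pre[OF e1] l by simp
  then have u: "u = w @ [last u]" using l
    by (metis append_butlast_last_id length_greater_0_conv zero_less_Suc)
  show ?thesis using z u c by (cases "last u") auto
qed
lemma nbr_e:
  assumes "length v + 2 = r" "GT_E r (c, v) x" "GT_E r x z" "GT_E r z (\<not>c, v @ [y])"
  shows "x = (c, v @ [y])"
proof -
  obtain c2 u2 where z: "z = (c2,u2)" by (cases z)
  obtain c1 u1 where x: "x = (c1,u1)" by (cases x)
  have e1: "GT_E r (c,v) (c1,u1)" using assms z x by simp
  have e2: "GT_E r (c1,u1) (c2,u2)" using assms z x by simp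
  have e3: "GT_E r (c2,u2) (\<not>c, v@[y])" using assms z x by simp
  have l1: "length u1 = Suc (length v)"
  proof (rule ccontr)
    assume "length u1 \<noteq> Suc (length v)"
    then have a: "length v = Suc (length u1)" using E_len[OF e1] by linarith
    then have b: "length u2 = length v" using E_len[OF e2] E_len[OF e3] by (simp; arith)
    have "c1 = c" using E_copy[OF e1] a assms by simp
    moreover have "c2 = c1" using E_copy[OF e2] a b assms by simp
    moreover have "(\<not> c) = c2" using E_copy[OF e3] b assms by simp
    ultimately show False by metis
  qed
  have c1: "c1 = c" using E_copy[OF e1] l1 assms by simp
  have l2: "length u2 = Suc (Suc (length v))"
  proof (rule ccontr)
    assume "length u2 \<noteq> Suc (Suc (length v))"
    then have b: "length u2 = length v" using l1 E_len[OF e2] E_len[OF e3] by (simp; arith)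
    have "c2 = c1" using E_copy[OF e2] l1 b assms by simp
    moreover have "(\<not> c) = c2" using E_copy[OF e3] b assms by simp
    ultimately show False using c1 by metis
  qed
  have "u1 = butlast u2" using E_pre[OF e2] l1 l2 by simp
  moreover have "v @ [y] = butlast u2" using E_pre'[OF e3] l2 by simp
  ultimately show ?thesis using x c1 by simp
qed
lemma nbr_e2:
  assumes "length v + 2 = r" "GT_E r (c, v) z" "GT_E r z (\<not>c, v @ [y])"
  shows False
proof -
  obtain c' u where z: "z = (c',u)" by (cases z)
  have e1: "GT_E r (c,v) (c',u)" using assms z by simp
  have e2: "GT_E r (c',u) (\<not>c, v@[y])" using assms z by simp
  have l: "length u = Suc (length v)" using E_len[OF e1] E_len[OF e2] by auto
  have "c' = c" using E_copy[OF e1] l assms by simp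
  moreover have "(\<not> c) = c'" using E_copy[OF e2] l assms by simp
  ultimately show False by simp
qed
lemma nbr_f:
  assumes "length v + 2 = r" "y' \<noteq> y"
    "GT_E r (False, v @ [y, t]) x" "GT_E r x z" "GT_E r z (c, v @ [y'])"
  shows "x = (c, v @ [y])"
proof -
  obtain c2 u2 where z: "z = (c2,u2)" by (cases z)
  obtain c1 u1 where x: "x = (c1,u1)" by (cases x)
  have e1: "GT_E r (False, v @ [y, t]) (c1,u1)" using assms z x by simp
  have e2: "GT_E r (c1,u1) (c2,u2)" using assms z x by simp
  have e3: "GT_E r (c2,u2) (c, v@[y'])" using assms z x by simp
  have l1: "length u1 = Suc (length v)" using E_len[OF e1] E_le[OF e1] assms by auto
  have u1: "u1 = v @ [y]" using E_pre'[OF e1] l1 by (simp add: butlast_append)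
  have l2: "length u2 = length v"
  proof (rule ccontr)
    assume "length u2 \<noteq> length v"
    then have b: "length u2 = Suc (Suc (length v))" using l1 E_len[OF e2] by auto
    have "u1 = butlast u2" using E_pre[OF e2] l1 b by simp
    moreover have "v @ [y'] = butlast u2" using E_pre'[OF e3] b by simp
    ultimately show False using u1 assms(2) by (metis append1_eq_conv)
  qed
  have "c2 = c1" using E_copy[OF e2] l1 l2 assms by simp
  moreover have "c = c2" using E_copy[OF e3] l2 assms by simp
  ultimately show ?thesis using x u1 by simp
qed
lemma nbr_f2:
  assumes "length v + 2 = r" "y' \<noteq> y" "GT_E r (False, v @ [y, t]) z" "GT_E r z (c, v @ [y'])"
  shows False
proof -
  obtain c' u where z: "z = (c',u)" by (cases z)
  have e1: "GT_E r (False, v @ [y, t]) (c',u)" using assms z by simp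
  have e2: "GT_E r (c',u) (c, v@[y'])" using assms z by simp
  have l: "length u = Suc (length v)" using E_len[OF e1] E_le[OF e1] assms by auto
  show False using E_len[OF e2] l by simp
qed
lemma walk_single: "is_walk V E [x] a b \<longleftrightarrow> x = a \<and> x = b \<and> x \<in> V"
  unfolding is_walk_def by auto

lemma walk_Cons2: "is_walk V E (x # y # p) a b \<longleftrightarrow> x = a \<and> x \<in> V \<and> E x y \<and> is_walk V E (y # p) y b"
proof
  assume w: "is_walk V E (x # y # p) a b"
  have A: "\<And>i. Suc i < length (x # y # p) \<Longrightarrow> E ((x # y # p) ! i) ((x # y # p) ! Suc i)"
    using w unfolding is_walk_def by blast
  have "E x y" using A[of 0] by simp
  moreover have "\<forall>i. Suc i < length (y # p) \<longrightarrow> E ((y # p) ! i) ((y # p) ! Suc i)"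
  proof (intro allI impI)
    fix i assume "Suc i < length (y # p)"
    then have "Suc (Suc i) < length (x # y # p)" by simp
    from A[OF this] show "E ((y # p) ! i) ((y # p) ! Suc i)" by simp
  qed
  moreover have "x = a" "x \<in> V" "last (y # p) = b" "set (y # p) \<subseteq> V" using w unfolding is_walk_def by auto
  ultimately show "x = a \<and> x \<in> V \<and> E x y \<and> is_walk V E (y # p) y b"
    unfolding is_walk_def by simp
next
  assume h: "x = a \<and> x \<in> V \<and> E x y \<and> is_walk V E (y # p) y b"
  have B: "\<And>i. Suc i < length (y # p) \<Longrightarrow> E ((y # p) ! i) ((y # p) ! Suc i)"
    using h unfolding is_walk_def by blast
  have "\<forall>i. Suc i < length (x # y # p) \<longrightarrow> E ((x # y # p) ! i) ((x # y # p) ! Suc i)"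
  proof (intro allI impI)
    fix i assume i: "Suc i < length (x # y # p)"
    show "E ((x # y # p) ! i) ((x # y # p) ! Suc i)"
    proof (cases i)
      case 0 then show ?thesis using h by auto
    next
      case (Suc j)
      then have "Suc j < length (y # p)" using i by simp
      from B[OF this] show ?thesis using Suc by simp
    qed
  qed
  moreover have "last (y # p) = b" "set (y # p) \<subseteq> V" using h unfolding is_walk_def by auto
  ultimately show "is_walk V E (x # y # p) a b" using h unfolding is_walk_def by auto
qed

lemma walk_Cons: "is_walk V E p y b \<Longrightarrow> x \<in> V \<Longrightarrow> E x y \<Longrightarrow> is_walk V E (x # p) x b"
proof -
  assume w: "is_walk V E p y b" "x \<in> V" "E x y"
  then obtain l where "p = y # l" unfolding is_walk_def by (cases p) auto
  then show ?thesis using w by (simp add: walk_Cons2)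
qed

lemma shortest_le:
  assumes sp: "is_shortest_path V E p a b" and w: "is_walk V E q a b"
  shows "length p \<le> length q"
proof -
  have q: "q \<noteq> []" using w by (simp add: is_walk_def)
  have "\<exists>p'. is_walk V E p' a b \<and> length p' = Suc (length q - 1)" using w q by (intro exI[of _ q]) auto
  then have "gdist V E a b \<le> length q - 1" unfolding gdist_def by (rule Least_le)
  then show ?thesis using sp q unfolding is_shortest_path_def by (cases q) auto
qed

lemma shortest_exists:
  assumes w: "is_walk V E q a b"
  shows "\<exists>p. is_shortest_path V E p a b"
proof -
  have q: "q \<noteq> []" using w by (simp add: is_walk_def)
  have "\<exists>p'. is_walk V E p' a b \<and> length p' = Suc (length q - 1)" using w q by (intro exI[of _ q]) auto
  then have "\<exists>p'. is_walk V E p' a b \<and> length p' = Suc (gdist V E a b)" unfolding gdist_def by (rule LeastI)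
  then show ?thesis unfolding is_shortest_path_def by blast
qed

lemma list_le4:
  assumes "p \<noteq> []" "length p \<le> 4"
  shows "(\<exists>z1. p = [z1]) \<or> (\<exists>z1 z2. p = [z1, z2]) \<or> (\<exists>z1 z2 z3. p = [z1, z2, z3]) \<or> (\<exists>z1 z2 z3 z4. p = [z1, z2, z3, z4])"
proof -
  obtain z1 p1 where p: "p = z1 # p1" using assms by (cases p) auto
  show ?thesis
  proof (cases p1)
    case Nil then show ?thesis using p by simp
  next
    case (Cons z2 p2)
    show ?thesis
    proof (cases p2)
      case Nil then show ?thesis using p Cons by simp
    next
      case (Cons z3 p3)
      show ?thesis
      proof (cases p3)
        case Nil then show ?thesis using p \<open>p1 = _\<close> Cons by simp
      next
        case (Cons z4 p4)
        then have "p4 = []" using assms p \<open>p1 = _\<close> \<open>p2 = _\<close> by simp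
        then show ?thesis using p \<open>p1 = _\<close> \<open>p2 = _\<close> Cons by simp
      qed
    qed
  qed
qed

lemma blocked2:
  assumes "a \<in> V" "b \<in> V" "x \<in> V" "a \<noteq> b" "\<not> E a b" "E a x" "E x b"
    and all: "\<And>y. E a y \<Longrightarrow> E y b \<Longrightarrow> y \<in> S \<and> y \<noteq> a \<and> y \<noteq> b"
  shows "\<not> S_visible V E S a b"
proof
  assume "S_visible V E S a b"
  then obtain p where sp: "is_shortest_path V E p a b" and int: "set p \<inter> S \<subseteq> {a, b}"
    unfolding S_visible_def by blast
  have w3: "is_walk V E [a, x, b] a b" using assms by (simp add: walk_Cons2 walk_single)
  have len: "length p \<le> 3" using shortest_le[OF sp w3] by simp
  have wp: "is_walk V E p a b" and ne: "p \<noteq> []" using sp by (auto simp: is_shortest_path_def is_walk_def)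
  have "length p \<le> 4" using len by simp
  from list_le4[OF ne this] show False
  proof (elim disjE exE)
    fix z1 assume "p = [z1]" then show False using wp assms(4,5) by (auto simp: walk_single)
  next
    fix z1 z2 assume "p = [z1, z2]" then show False using wp assms(5) by (auto simp: walk_Cons2 walk_single)
  next
    fix z1 z2 z3 assume p: "p = [z1, z2, z3]"
    then have "E a z2" "E z2 b" using wp by (auto simp: walk_Cons2 walk_single)
    then have "z2 \<in> S" "z2 \<noteq> a" "z2 \<noteq> b" using all by auto
    then show False using int p by auto
  next
    fix z1 z2 z3 z4 assume "p = [z1, z2, z3, z4]" then show False using len by simp
  qed
qed

lemma blocked3:
  assumes "a \<in> V" "b \<in> V" "x \<in> V" "y \<in> V" "a \<noteq> b" "\<not> E a b" "\<And>z. E a z \<Longrightarrow> E z b \<Longrightarrow> False"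
    "E a x" "E x y" "E y b"
    and all: "\<And>x y. E a x \<Longrightarrow> E x y \<Longrightarrow> E y b \<Longrightarrow> (x \<in> S \<and> x \<noteq> a \<and> x \<noteq> b) \<or> (y \<in> S \<and> y \<noteq> a \<and> y \<noteq> b)"
  shows "\<not> S_visible V E S a b"
proof
  assume "S_visible V E S a b"
  then obtain p where sp: "is_shortest_path V E p a b" and int: "set p \<inter> S \<subseteq> {a, b}"
    unfolding S_visible_def by blast
  have w4: "is_walk V E [a, x, y, b] a b" using assms by (simp add: walk_Cons2 walk_single)
  have len: "length p \<le> 4" using shortest_le[OF sp w4] by simp
  have wp: "is_walk V E p a b" and ne: "p \<noteq> []" using sp by (auto simp: is_shortest_path_def is_walk_def)
  from list_le4[OF ne len] show False
  proof (elim disjE exE)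
    fix z1 assume "p = [z1]" then show False using wp assms(4,5) by (auto simp: walk_single)
  next
    fix z1 z2 assume "p = [z1, z2]" then show False using wp assms(6) by (auto simp: walk_Cons2 walk_single)
  next
    fix z1 z2 z3 assume p: "p = [z1, z2, z3]"
    then have "E a z2" "E z2 b" using wp by (auto simp: walk_Cons2 walk_single)
    then show False using assms(7) by blast
  next
    fix z1 z2 z3 z4 assume p: "p = [z1, z2, z3, z4]"
    then have "E a z2" "E z2 z3" "E z3 b" using wp by (auto simp: walk_Cons2 walk_single)
    then have "(z2 \<in> S \<and> z2 \<noteq> a \<and> z2 \<noteq> b) \<or> (z3 \<in> S \<and> z3 \<noteq> a \<and> z3 \<noteq> b)" using all by blast
    then show False using int p by auto
  qed
qed

lemma dual_mixed:
  assumes "dual_mutual_visibility_set V E S" "a \<in> V" "b \<in> V" "\<not> S_visible V E S a b"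
  shows "a \<in> S \<longleftrightarrow> b \<notin> S"
proof -
  have m: "S_visible V E S u v" if "u \<in> S" "v \<in> S" for u v
    using assms(1) that unfolding dual_mutual_visibility_set_def mutual_visibility_set_def by blast
  have d: "S_visible V E S u v" if "u \<in> V" "u \<notin> S" "v \<in> V" "v \<notin> S" for u v
    using assms(1) that unfolding dual_mutual_visibility_set_def by blast
  show ?thesis using m[of a b] d[of a b] assms(2-4) by blast
qed
lemma V_iff: "(c, w) \<in> GT_V r \<longleftrightarrow> length w < r \<or> (c = False \<and> length w = r)"
  unfolding GT_V_def by auto

lemma depth_r1_notin:
  assumes dual: "dual_mutual_visibility_set (GT_V r) (GT_E r) S" and len: "length v + 2 = r"
  shows "(c, v @ [y]) \<notin> S"
proof
  assume pS: "(c, v @ [y]) \<in> S"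
  define p where "p = (c, v @ [y])"
  define a where "a = (c, v)"
  define q where "q = (\<not> c, v @ [y])"
  define p' where "p' = (c, v @ [\<not> y])"
  define l where "l = (\<lambda>t. (False, v @ [y, t]))"
  have pS': "p \<in> S" using pS p_def by simp
  have Vp: "p \<in> GT_V r" and Va: "a \<in> GT_V r" and Vq: "q \<in> GT_V r" and Vp': "p' \<in> GT_V r"
    using len by (auto simp: p_def a_def q_def p'_def V_iff)
  have Vl: "l t \<in> GT_V r" for t using len by (auto simp: l_def V_iff)
  have Eap: "GT_E r a p" using len unfolding a_def p_def by (intro E_down) auto
  have Eap': "GT_E r a p'" using len unfolding a_def p'_def by (intro E_down) auto
  have Epl: "GT_E r p (l t)" for t using E_down_leaf[of "v @ [y]" r c t] len by (simp add: p_def l_def)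
  have Eql: "GT_E r q (l t)" for t using E_down_leaf[of "v @ [y]" r "\<not> c" t] len by (simp add: q_def l_def)
  have aL: "a \<in> S \<longleftrightarrow> l t \<notin> S" for t
  proof -
    have nE: "\<not> GT_E r a (l t)"
      using E_len[of r c v False "v @ [y, t]"] by (auto simp: a_def l_def)
    have "\<not> S_visible (GT_V r) (GT_E r) S a (l t)"
    proof (rule blocked2[where x = p])
      fix z assume "GT_E r a z" "GT_E r z (l t)"
      then have "z = p" using nbr_a[OF len] by (simp add: a_def l_def p_def)
      then show "z \<in> S \<and> z \<noteq> a \<and> z \<noteq> l t" using pS' by (simp add: p_def a_def l_def)
    qed (use Va Vl Vp nE Eap Epl in \<open>auto simp: a_def l_def\<close>)
    then show ?thesis using dual_mixed[OF dual Va Vl] by blast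
  qed
  show False
  proof (cases "a \<in> S")
    case False
    then have lS: "l t \<in> S" for t using aL by blast
    have qS: "q \<notin> S"
    proof
      assume qS: "q \<in> S"
      have nE: "\<not> GT_E r (l False) (l True)"
        using E_len[of r False "v @ [y, False]" False "v @ [y, True]"] by (auto simp: l_def)
      have "\<not> S_visible (GT_V r) (GT_E r) S (l False) (l True)"
      proof (rule blocked2[where x = p])
        fix z assume "GT_E r (l False) z" "GT_E r z (l True)"
        then have "z = (False, v @ [y]) \<or> z = (True, v @ [y])"
          using nbr_b[of "v @ [y]" r False z True] len by (simp add: l_def)
        then have "z = p \<or> z = q" by (cases c) (auto simp: p_def q_def)
        then show "z \<in> S \<and> z \<noteq> l False \<and> z \<noteq> l True" using pS' qS by (auto simp: p_def q_def l_def)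
      qed (use Vl Vp nE Epl E_sym in \<open>auto simp: l_def\<close>)
      then show False using dual_mixed[OF dual Vl Vl] lS by blast
    qed
    have nEaq: "\<not> GT_E r a q"
      using E_copy[of r c v "\<not> c" "v @ [y]"] len by (auto simp: a_def q_def)
    have "\<not> S_visible (GT_V r) (GT_E r) S a q"
    proof (rule blocked3[where x = p and y = "l False"])
      fix z assume "GT_E r a z" "GT_E r z q"
      then show False using nbr_e2[OF len, of c z y] by (simp add: a_def q_def)
    next
      fix x z assume "GT_E r a x" "GT_E r x z" "GT_E r z q"
      then have "x = p" using nbr_e[OF len] by (auto simp: a_def q_def p_def)
      then show "(x \<in> S \<and> x \<noteq> a \<and> x \<noteq> q) \<or> (z \<in> S \<and> z \<noteq> a \<and> z \<noteq> q)"
        using pS' by (auto simp: p_def a_def q_def)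
    qed (use Va Vq Vp Vl nEaq Eap Epl Eql E_sym in \<open>auto simp: a_def q_def\<close>)
    then show False using dual_mixed[OF dual Va Vq] qS False by blast
  next
    case True
    then have lS: "l t \<notin> S" for t using aL by blast
    have nEpp': "\<not> GT_E r p p'"
      using E_len[of r c "v @ [y]" c "v @ [\<not> y]"] by (auto simp: p_def p'_def)
    have "\<not> S_visible (GT_V r) (GT_E r) S p p'"
    proof (rule blocked2[where x = a])
      fix z assume "GT_E r p z" "GT_E r z p'"
      then have "z = a" using nbr_c[of v r y "\<not> y" c z] len by (auto simp: p_def p'_def a_def)
      then show "z \<in> S \<and> z \<noteq> p \<and> z \<noteq> p'" using True by (simp add: a_def p_def p'_def)
    qed (use Va Vp Vp' nEpp' Eap Eap' E_sym in \<open>auto simp: p_def p'_def\<close>)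
    then have p'S: "p' \<notin> S" using dual_mixed[OF dual Vp Vp'] pS' by blast
    have nElp': "\<not> GT_E r (l False) p'"
    proof
      assume e: "GT_E r (l False) p'"
      have "v @ [\<not> y] = butlast (v @ [y, False])"
        using E_pre'[of r False "v @ [y, False]" c "v @ [\<not> y]"] e by (simp add: l_def p'_def)
      then show False by (simp add: butlast_append)
    qed
    have "\<not> S_visible (GT_V r) (GT_E r) S (l False) p'"
    proof (rule blocked3[where x = p and y = a])
      fix z assume "GT_E r (l False) z" "GT_E r z p'"
      then show False using nbr_f2[of v r "\<not> y" y False z c] len by (auto simp: l_def p'_def)
    next
      fix x z assume "GT_E r (l False) x" "GT_E r x z" "GT_E r z p'"
      then have "x = p" using nbr_f[of v r "\<not> y" y False x z c] len by (auto simp: l_def p'_def p_def)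
      then show "(x \<in> S \<and> x \<noteq> l False \<and> x \<noteq> p') \<or> (z \<in> S \<and> z \<noteq> l False \<and> z \<noteq> p')"
        using pS' by (auto simp: p_def l_def p'_def)
    qed (use Va Vp Vp' Vl nElp' Eap Eap' Epl E_sym in \<open>auto simp: l_def p'_def\<close>)
    then show False using dual_mixed[OF dual Vl Vp'] p'S lS by blast
  qed
qed
lemma child_in:
  assumes dual: "dual_mutual_visibility_set (GT_V r) (GT_E r) S" and len: "length w + 2 \<le> r"
    and xS: "(c, w) \<in> S"
  shows "(c, w @ [False]) \<in> S \<or> (c, w @ [True]) \<in> S"
proof -
  have V0: "(c, w @ [t]) \<in> GT_V r" for t using len by (simp add: V_iff)
  have Vx: "(c, w) \<in> GT_V r" using len by (simp add: V_iff)
  have E1: "GT_E r (c, w) (c, w @ [t])" for t using len by (intro E_down) auto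
  have nE: "\<not> GT_E r (c, w @ [False]) (c, w @ [True])"
    using E_len[of r c "w @ [False]" c "w @ [True]"] by auto
  have "\<not> S_visible (GT_V r) (GT_E r) S (c, w @ [False]) (c, w @ [True])"
  proof (rule blocked2[where x = "(c, w)"])
    fix z assume "GT_E r (c, w @ [False]) z" "GT_E r z (c, w @ [True])"
    then have "z = (c, w)" using nbr_c[of w r False True c z] len by auto
    then show "z \<in> S \<and> z \<noteq> (c, w @ [False]) \<and> z \<noteq> (c, w @ [True])" using xS by simp
  qed (use V0 Vx nE E1 E_sym in auto)
  then show ?thesis using dual_mixed[OF dual V0 V0] by blast
qed

lemma nonleaf_notin:
  assumes dual: "dual_mutual_visibility_set (GT_V r) (GT_E r) S" and r: "r \<ge> 2"
    and len: "length w < r"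
  shows "(c, w) \<notin> S"
proof -
  have H: "\<forall>c w. length w + 1 + k = r \<longrightarrow> (c, w) \<notin> S" for k
  proof (induction k)
    case 0
    show ?case
    proof (intro allI impI)
      fix c and w :: "bool list" assume l: "length w + 1 + 0 = r"
      then have "w \<noteq> []" using r by auto
      then obtain v y where w: "w = v @ [y]" by (metis append_butlast_last_id)
      have "length v + 2 = r" using l w by simp
      then show "(c, w) \<notin> S" using depth_r1_notin[OF dual] w by simp
    qed
  next
    case (Suc k)
    show ?case
    proof (intro allI impI notI)
      fix c and w :: "bool list" assume l: "length w + 1 + Suc k = r" and xS: "(c, w) \<in> S"
      have "(c, w @ [False]) \<in> S \<or> (c, w @ [True]) \<in> S" using child_in[OF dual _ xS] l by simp
      then show False using Suc.IH l by auto
    qed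
  qed
  have "length w + 1 + (r - Suc (length w)) = r" using len by simp
  then show ?thesis using H[of "r - Suc (length w)"] by blast
qed

lemma sib_notboth:
  assumes dual: "dual_mutual_visibility_set (GT_V r) (GT_E r) S" and r: "r \<ge> 2"
    and len: "length w + 1 = r"
  shows "\<not> ((False, w @ [False]) \<in> S \<and> (False, w @ [True]) \<in> S)"
proof
  assume h: "(False, w @ [False]) \<in> S \<and> (False, w @ [True]) \<in> S"
  have nS: "(c, w) \<notin> S" for c using nonleaf_notin[OF dual r] len by simp
  have V: "(c, w) \<in> GT_V r" for c using len by (simp add: V_iff)
  have Vl: "(False, w @ [t]) \<in> GT_V r" for t using len by (simp add: V_iff)
  have E1: "GT_E r (c, w) (False, w @ [t])" for c t using E_down_leaf[OF len] .
  have nE: "\<not> GT_E r (False, w) (True, w)" using E_len[of r False w True w] by auto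
  have "\<not> S_visible (GT_V r) (GT_E r) S (False, w) (True, w)"
  proof (rule blocked2[where x = "(False, w @ [False])"])
    fix z assume "GT_E r (False, w) z" "GT_E r z (True, w)"
    then have "z = (False, w @ [False]) \<or> z = (False, w @ [True])" using nbr_d[OF len] by blast
    then show "z \<in> S \<and> z \<noteq> (False, w) \<and> z \<noteq> (True, w)" using h by auto
  qed (use V Vl nE E1 E_sym in auto)
  then show False using dual_mixed[OF dual V V] nS by blast
qed

definition good :: "nat \<Rightarrow> (bool \<times> bool list) set \<Rightarrow> bool" where
  "good r S \<longleftrightarrow> S \<subseteq> {(False, w) | w. length w = r} \<and>
     (\<forall>w. length w + 1 = r \<longrightarrow> \<not> ((False, w @ [False]) \<in> S \<and> (False, w @ [True]) \<in> S))"

lemma dual_good: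
  assumes dual: "dual_mutual_visibility_set (GT_V r) (GT_E r) S" and r: "r \<ge> 2"
  shows "good r S"
proof -
  have SV: "S \<subseteq> GT_V r"
    using dual unfolding dual_mutual_visibility_set_def mutual_visibility_set_def by blast
  have "S \<subseteq> {(False, w) | w. length w = r}"
  proof
    fix x assume xS: "x \<in> S"
    obtain c w where x: "x = (c, w)" by (cases x)
    have "(c, w) \<in> GT_V r" using SV xS x by auto
    moreover have "\<not> length w < r" using nonleaf_notin[OF dual r, of w c] xS x by auto
    ultimately show "x \<in> {(False, w) | w. length w = r}" using x by (auto simp: V_iff)
  qed
  then show ?thesis unfolding good_def using sib_notboth[OF dual r] by blast
qed
definition Rg :: "nat \<Rightarrow> bool \<times> bool list \<Rightarrow> bool \<times> bool list \<Rightarrow> bool" where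
  "Rg r = (\<lambda>x y. GT_E r x y \<and> x \<in> GT_V r \<and> y \<in> GT_V r)\<^sup>*\<^sup>*"

lemma Rg_walk:
  assumes "Rg r a b" "a \<in> GT_V r"
  shows "\<exists>p. is_walk (GT_V r) (GT_E r) p a b"
proof -
  have "(\<lambda>x y. GT_E r x y \<and> x \<in> GT_V r \<and> y \<in> GT_V r)\<^sup>*\<^sup>* a b" using assms(1) unfolding Rg_def .
  then show ?thesis using assms(2)
  proof (induction rule: converse_rtranclp_induct)
    case base
    have "is_walk (GT_V r) (GT_E r) [b] b b" using base by (simp add: walk_single)
    then show ?case by blast
  next
    case (step x y)
    from step.hyps(1) have e: "GT_E r x y" "x \<in> GT_V r" "y \<in> GT_V r" by auto
    from step.IH[OF e(3)] obtain p where "is_walk (GT_V r) (GT_E r) p y b" by blast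
    from walk_Cons[OF this e(2) e(1)] show ?case by blast
  qed
qed

lemma Rg_step: "GT_E r x y \<Longrightarrow> x \<in> GT_V r \<Longrightarrow> y \<in> GT_V r \<Longrightarrow> Rg r y z \<Longrightarrow> Rg r x z"
  unfolding Rg_def by (rule converse_rtranclp_into_rtranclp) auto

lemma Rg_trans: "Rg r x y \<Longrightarrow> Rg r y z \<Longrightarrow> Rg r x z"
  unfolding Rg_def by (rule rtranclp_trans)

lemma Rg_sym: assumes "Rg r a b" shows "Rg r b a"
proof -
  have "(\<lambda>x y. GT_E r x y \<and> x \<in> GT_V r \<and> y \<in> GT_V r)\<^sup>*\<^sup>* a b" using assms unfolding Rg_def .
  then show ?thesis
  proof (induction rule: rtranclp_induct)
    case base
    show ?case unfolding Rg_def by simp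
  next
    case (step y z)
    have "Rg r y y" unfolding Rg_def by simp
    then have "Rg r z y" using step(2) E_sym Rg_step[of r z y y] by auto
    then show ?case using step(3) Rg_trans by blast
  qed
qed

lemma norm_V: "length w \<le> r \<Longrightarrow> gt_norm r c w \<in> GT_V r"
  unfolding gt_norm_def by (auto simp: V_iff)

lemma up: "r \<ge> 1 \<Longrightarrow> length w \<le> r \<Longrightarrow> Rg r (gt_norm r c w) (c, [])"
proof (induction w rule: rev_induct)
  case Nil
  then show ?case unfolding Rg_def gt_norm_def by simp
next
  case (snoc x w)
  then have lw: "length w < r" by simp
  then have IH: "Rg r (c, w) (c, [])" using snoc gt_norm_def by simp
  have "GT_E r (gt_norm r c (w @ [x])) (c, w)"
    unfolding GT_E_def using lw by (intro exI[of _ c] exI[of _ w] exI[of _ x]) (simp add: gt_norm_def)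
  moreover have "gt_norm r c (w @ [x]) \<in> GT_V r" using snoc.prems by (intro norm_V) simp
  moreover have "(c, w) \<in> GT_V r" using lw by (simp add: V_iff)
  ultimately show ?case using Rg_step IH by blast
qed

lemma to_root: assumes r: "r \<ge> 1" and u: "u \<in> GT_V r" shows "Rg r u (False, [])"
proof -
  obtain c w where uw: "u = (c, w)" by (cases u)
  have lw: "length w \<le> r" using u uw by (auto simp: V_iff)
  define z where "z = replicate r False"
  have "Rg r (gt_norm r True z) (True, [])" using up[OF r] by (simp add: z_def)
  then have a: "Rg r (True, []) (False, z)" using Rg_sym by (simp add: gt_norm_def z_def)
  have "Rg r (gt_norm r False z) (False, [])" using up[OF r] by (simp add: z_def)
  then have b: "Rg r (False, z) (False, [])" by (simp add: gt_norm_def z_def)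
  have TF: "Rg r (True, []) (False, [])" using Rg_trans[OF a b] .
  show ?thesis
  proof (cases c)
    case False
    have "gt_norm r False w = (False, w)" by (simp add: gt_norm_def)
    then show ?thesis using up[OF r lw, of False] uw False by simp
  next
    case True
    then have "length w < r" using u uw by (auto simp: V_iff)
    then have "gt_norm r True w = (True, w)" by (simp add: gt_norm_def)
    then have "Rg r u (True, [])" using up[OF r lw, of True] uw True by simp
    then show ?thesis using TF Rg_trans by blast
  qed
qed

lemma all_walk:
  assumes "r \<ge> 1" "u \<in> GT_V r" "v \<in> GT_V r"
  shows "\<exists>p. is_walk (GT_V r) (GT_E r) p u v"
proof -
  have "Rg r u (False, [])" using to_root assms by blast
  moreover have "Rg r (False, []) v" using to_root assms Rg_sym by blast
  ultimately have "Rg r u v" using Rg_trans by blast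
  then show ?thesis using Rg_walk assms by blast
qed
lemma leaf_nbr:
  assumes "length w = r" "r \<ge> 1"
  shows "GT_E r (False, w) y \<longleftrightarrow> (y = (False, butlast w) \<or> y = (True, butlast w))"
proof -
  obtain z x where w: "w = z @ [x]" using assms
    by (metis append_butlast_last_id length_0_conv not_one_le_zero)
  show ?thesis using assms unfolding w by (cases y) (auto simp: E_iff D_def)
qed

definition sib :: "bool \<times> bool list \<Rightarrow> bool \<times> bool list" where
  "sib x = (fst x, butlast (snd x) @ [\<not> last (snd x)])"

lemma sib_leaf:
  assumes "length w = r" "r \<ge> 1"
  shows "sib (False, w) = (False, butlast w @ [\<not> last w])"
    and "length (butlast w @ [\<not> last w]) = r"
    and "butlast (butlast w @ [\<not> last w]) = butlast w"
  using assms by (auto simp: sib_def)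

lemma sib_nbr:
  assumes "length w = r" "r \<ge> 1" "GT_E r (False, w) y"
  shows "GT_E r (sib (False, w)) y \<and> length (snd y) < r"
proof -
  have y: "y = (False, butlast w) \<or> y = (True, butlast w)" using leaf_nbr assms by blast
  have "GT_E r (False, butlast w @ [\<not> last w]) y"
    using leaf_nbr[OF sib_leaf(2)[OF assms(1,2)] assms(2)] y sib_leaf(3)[OF assms(1,2)] by simp
  moreover have "length (snd y) < r" using y assms(1,2) by auto
  ultimately show ?thesis using sib_leaf(1)[OF assms(1,2)] by simp
qed

lemma reroute:
  assumes g: "good r S" and r: "r \<ge> 1" and sp: "is_shortest_path (GT_V r) (GT_E r) p u v"
  shows "S_visible (GT_V r) (GT_E r) S u v"
proof -
  define n where "n = length p"
  define f where "f = (\<lambda>i. if 0 < i \<and> Suc i < n \<and> p ! i \<in> S then sib (p ! i) else p ! i)"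
  define q where "q = map f [0..<n]"
  have w: "is_walk (GT_V r) (GT_E r) p u v" and lenp: "length p = Suc (gdist (GT_V r) (GT_E r) u v)"
    using sp by (auto simp: is_shortest_path_def)
  have n0: "n > 0" using lenp n_def by simp
  have SL: "fst x = False \<and> length (snd x) = r" if "x \<in> S" for x
    using g that unfolding good_def by auto
  have sibS: "sib x \<notin> S" if xS: "x \<in> S" for x
  proof
    assume sS: "sib x \<in> S"
    obtain w where x: "x = (False, w)" and lw: "length w = r" using SL[OF xS] by (cases x) auto
    then have "w \<noteq> []" using r by auto
    then obtain z b where wz: "w = z @ [b]" by (metis append_butlast_last_id)
    have "length z + 1 = r" using lw wz by simp
    then have nb: "\<not> ((False, z @ [False]) \<in> S \<and> (False, z @ [True]) \<in> S)" using g unfolding good_def by blast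
    have "sib x = (False, z @ [\<not> b])" using x wz by (simp add: sib_def)
    then show False using nb xS sS x wz by (cases b) auto
  qed
  have sibV: "sib x \<in> GT_V r" if xS: "x \<in> S" for x
  proof -
    obtain w where x: "x = (False, w)" and lw: "length w = r" using SL[OF xS] by (cases x) auto
    then show ?thesis using sib_leaf[OF lw r] by (simp add: V_iff)
  qed
  have sibE: "GT_E r (sib x) y \<and> y \<notin> S" if xS: "x \<in> S" and xy: "GT_E r x y" for x y
  proof -
    obtain w where x: "x = (False, w)" and lw: "length w = r" using SL[OF xS] by (cases x) auto
    then have "GT_E r (sib x) y \<and> length (snd y) < r" using sib_nbr[OF lw r] xy by simp
    then show ?thesis using SL by fastforce
  qed
  have pV: "p ! i \<in> GT_V r" if "i < n" for i
    using w that unfolding is_walk_def n_def by (meson nth_mem subsetD)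
  have fV: "f i \<in> GT_V r" if "i < n" for i
    using pV[OF that] sibV by (simp add: f_def)
  have pE: "GT_E r (p ! i) (p ! Suc i)" if "Suc i < n" for i
    using w that unfolding is_walk_def n_def by blast
  have fE: "GT_E r (f i) (f (Suc i))" if i: "Suc i < n" for i
  proof (cases "0 < i \<and> p ! i \<in> S")
    case True
    then have "GT_E r (sib (p ! i)) (p ! Suc i) \<and> p ! Suc i \<notin> S" using sibE pE[OF i] by blast
    then show ?thesis using True i by (simp add: f_def)
  next
    case False
    then have fi: "f i = p ! i" by (auto simp: f_def)
    show ?thesis
    proof (cases "Suc (Suc i) < n \<and> p ! Suc i \<in> S")
      case True
      have "GT_E r (p ! Suc i) (p ! i)" using pE[OF i] E_sym by blast
      then have "GT_E r (sib (p ! Suc i)) (p ! i)" using sibE True by blast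
      then show ?thesis using fi True E_sym by (simp add: f_def)
    next
      case False
      then have "f (Suc i) = p ! Suc i" by (auto simp: f_def)
      then show ?thesis using fi pE[OF i] by simp
    qed
  qed
  have f0: "f 0 = u"
  proof -
    have "p \<noteq> []" "hd p = u" using w unfolding is_walk_def by auto
    then show ?thesis by (simp add: f_def hd_conv_nth)
  qed
  have fl: "f (n - 1) = v"
  proof -
    have "p \<noteq> []" "last p = v" using w unfolding is_walk_def by auto
    then show ?thesis using n0 by (simp add: f_def n_def last_conv_nth)
  qed
  have lq: "length q = n" by (simp add: q_def)
  have qn: "q ! i = f i" if "i < n" for i using that by (simp add: q_def)
  have wq: "is_walk (GT_V r) (GT_E r) q u v"
    unfolding is_walk_def
  proof (intro conjI allI impI)
    show "q \<noteq> []" using lq n0 by auto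
    have qne: "q \<noteq> []" using lq n0 by auto
    show "hd q = u" using f0 qn[of 0] n0 qne by (simp add: hd_conv_nth)
    show "last q = v" using fl qn[of "n - 1"] n0 lq qne by (simp add: last_conv_nth)
    show "set q \<subseteq> GT_V r" using fV by (auto simp: q_def)
    fix i assume "Suc i < length q"
    then show "GT_E r (q ! i) (q ! Suc i)" using fE qn lq by simp
  qed
  have "is_shortest_path (GT_V r) (GT_E r) q u v" using wq lq lenp n_def by (simp add: is_shortest_path_def)
  moreover have "set q \<inter> S \<subseteq> {u, v}"
  proof
    fix x assume x: "x \<in> set q \<inter> S"
    then obtain i where i: "i < n" "q ! i = x" and xS: "x \<in> S" by (auto simp: in_set_conv_nth lq)
    show "x \<in> {u, v}"
    proof (cases "0 < i \<and> Suc i < n")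
      case True
      then have xf: "x = f i" using i qn by simp
      show ?thesis
      proof (cases "p ! i \<in> S")
        case True
        then show ?thesis using xf \<open>0 < i \<and> Suc i < n\<close> sibS xS by (simp add: f_def)
      next
        case False
        then show ?thesis using xf xS by (simp add: f_def)
      qed
    next
      case False
      then have "i = 0 \<or> i = n - 1" using i by auto
      then show ?thesis using f0 fl qn i by auto
    qed
  qed
  ultimately show ?thesis unfolding S_visible_def by blast
qed

lemma good_total:
  assumes g: "good r S" and r: "r \<ge> 1"
  shows "total_mutual_visibility_set (GT_V r) (GT_E r) S"
  unfolding total_mutual_visibility_set_def
proof (intro conjI ballI)
  show "S \<subseteq> GT_V r" using g unfolding good_def by (auto simp: V_iff)
  fix u v assume "u \<in> GT_V r" "v \<in> GT_V r"
  then obtain p where "is_walk (GT_V r) (GT_E r) p u v" using all_walk r by blast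
  then have "\<exists>q. is_shortest_path (GT_V r) (GT_E r) q u v" by (rule shortest_exists)
  then obtain q where "is_shortest_path (GT_V r) (GT_E r) q u v" by blast
  then show "S_visible (GT_V r) (GT_E r) S u v" using reroute g r by blast
qed

lemma total_dual:
  "total_mutual_visibility_set V E S \<Longrightarrow> dual_mutual_visibility_set V E S"
  unfolding total_mutual_visibility_set_def dual_mutual_visibility_set_def mutual_visibility_set_def
  by blast
definition Wd :: "nat \<Rightarrow> bool list set" where "Wd r = {w. length w + 1 = r}"

definition Phi :: "nat \<Rightarrow> (bool list \<Rightarrow> bool) \<Rightarrow> (bool \<times> bool list) set" where
  "Phi r f = (\<lambda>w. (False, w @ [f w])) ` Wd r"

lemma Wd_eq: "r \<ge> 1 \<Longrightarrow> Wd r = {xs. set xs \<subseteq> UNIV \<and> length xs = r - 1}"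
  unfolding Wd_def by auto

lemma finite_Wd: "r \<ge> 1 \<Longrightarrow> finite (Wd r)"
  using Wd_eq finite_lists_length_eq[of "UNIV :: bool set"] by simp

lemma card_Wd: "r \<ge> 1 \<Longrightarrow> card (Wd r) = 2 ^ (r - 1)"
  using Wd_eq card_lists_length_eq[of "UNIV :: bool set"] by simp

lemma good_leaf:
  assumes g: "good r S" and r: "r \<ge> 1" and xS: "x \<in> S"
  shows "\<exists>w b. x = (False, w @ [b]) \<and> w \<in> Wd r"
proof -
  obtain w0 where x: "x = (False, w0)" and l: "length w0 = r" using g xS unfolding good_def by auto
  then have "w0 \<noteq> []" using r by auto
  then obtain w b where "w0 = w @ [b]" by (metis append_butlast_last_id)
  then show ?thesis using x l by (auto simp: Wd_def)
qed

lemma good_sib: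
  assumes g: "good r S" and w: "w \<in> Wd r" and "(False, w @ [b]) \<in> S" and "(False, w @ [\<not> b]) \<in> S"
  shows False
  using assms unfolding good_def Wd_def by (cases b) auto

lemma good_inj:
  assumes g: "good r S" and r: "r \<ge> 1"
  shows "inj_on (\<lambda>x. butlast (snd x)) S" and "(\<lambda>x. butlast (snd x)) ` S \<subseteq> Wd r"
proof -
  show "inj_on (\<lambda>x. butlast (snd x)) S"
  proof (rule inj_onI)
    fix x y assume xS: "x \<in> S" and yS: "y \<in> S" and e: "butlast (snd x) = butlast (snd y)"
    obtain w b where x: "x = (False, w @ [b])" and w: "w \<in> Wd r" using good_leaf[OF g r xS] by blast
    obtain w' b' where y: "y = (False, w' @ [b'])" using good_leaf[OF g r yS] by blast
    have ww: "w' = w" using e x y by simp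
    show "x = y"
    proof (rule ccontr)
      assume "x \<noteq> y"
      then have "b' = (\<not> b)" using x y ww by auto
      then show False using good_sib[OF g w, of b] xS yS x y ww by simp
    qed
  qed
  show "(\<lambda>x. butlast (snd x)) ` S \<subseteq> Wd r"
    using good_leaf[OF g r] by fastforce
qed

lemma good_card:
  assumes g: "good r S" and r: "r \<ge> 1"
  shows "finite S" and "card S \<le> 2 ^ (r - 1)"
proof -
  have "finite ((\<lambda>x. butlast (snd x)) ` S)" using good_inj(2)[OF g r] finite_Wd[OF r] finite_subset by blast
  then show "finite S" using good_inj(1)[OF g r] finite_imageD by blast
  have "card S \<le> card (Wd r)" using card_inj_on_le[OF good_inj[OF g r] finite_Wd[OF r]] .
  then show "card S \<le> 2 ^ (r - 1)" using card_Wd[OF r] by simp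
qed

lemma Phi_good:
  assumes r: "r \<ge> 1"
  shows "good r (Phi r f)" and "card (Phi r f) = 2 ^ (r - 1)"
proof -
  show "good r (Phi r f)" unfolding good_def
  proof (intro conjI allI impI)
    show "Phi r f \<subseteq> {(False, w) | w. length w = r}" unfolding Phi_def Wd_def by auto
    fix w :: "bool list" assume "length w + 1 = r"
    show "\<not> ((False, w @ [False]) \<in> Phi r f \<and> (False, w @ [True]) \<in> Phi r f)"
    proof
      assume h: "(False, w @ [False]) \<in> Phi r f \<and> (False, w @ [True]) \<in> Phi r f"
      then have "f w = False" "f w = True" unfolding Phi_def by auto
      then show False by simp
    qed
  qed
  have "inj_on (\<lambda>w. (False, w @ [f w])) (Wd r)" by (rule inj_onI) simp
  then show "card (Phi r f) = 2 ^ (r - 1)" unfolding Phi_def using card_image card_Wd[OF r] by metis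
qed

definition Mx :: "nat \<Rightarrow> (bool \<times> bool list) set set" where
  "Mx r = {S. good r S \<and> card S = 2 ^ (r - 1)}"

lemma Mx_bij:
  assumes r: "r \<ge> 1"
  shows "bij_betw (Phi r) (Wd r \<rightarrow>\<^sub>E (UNIV :: bool set)) (Mx r)"
  unfolding bij_betw_def
proof (intro conjI)
  show "inj_on (Phi r) (Wd r \<rightarrow>\<^sub>E (UNIV :: bool set))"
  proof (rule inj_onI)
    fix f g assume f: "f \<in> Wd r \<rightarrow>\<^sub>E (UNIV :: bool set)" and g: "g \<in> Wd r \<rightarrow>\<^sub>E (UNIV :: bool set)"
      and e: "Phi r f = Phi r g"
    show "f = g"
    proof
      fix w
      show "f w = g w"
      proof (cases "w \<in> Wd r")
        case True
        then have "(False, w @ [f w]) \<in> Phi r g" using e unfolding Phi_def by blast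
        then show ?thesis unfolding Phi_def by auto
      next
        case False
        then show ?thesis using f g PiE_arb by metis
      qed
    qed
  qed
  show "Phi r ` (Wd r \<rightarrow>\<^sub>E UNIV) = Mx r"
  proof
    show "Phi r ` (Wd r \<rightarrow>\<^sub>E UNIV) \<subseteq> Mx r" using Phi_good[OF r] unfolding Mx_def by blast
    show "Mx r \<subseteq> Phi r ` (Wd r \<rightarrow>\<^sub>E UNIV)"
    proof
      fix S assume "S \<in> Mx r"
      then have g: "good r S" and c: "card S = 2 ^ (r - 1)" unfolding Mx_def by auto
      define f where "f = restrict (\<lambda>w. (False, w @ [True]) \<in> S) (Wd r)"
      have fP: "f \<in> Wd r \<rightarrow>\<^sub>E UNIV" unfolding f_def by (simp add: restrict_PiE_iff)
      have gS: "(\<lambda>x. butlast (snd x)) ` S = Wd r"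
      proof (rule card_subset_eq[OF finite_Wd[OF r] good_inj(2)[OF g r]])
        show "card ((\<lambda>x. butlast (snd x)) ` S) = card (Wd r)"
          using card_image[OF good_inj(1)[OF g r]] c card_Wd[OF r] by simp
      qed
      have "Phi r f = S"
      proof
        show "Phi r f \<subseteq> S"
        proof
          fix x assume "x \<in> Phi r f"
          then obtain w where w: "w \<in> Wd r" and x: "x = (False, w @ [f w])" unfolding Phi_def by auto
          obtain y where yS: "y \<in> S" and yw: "butlast (snd y) = w" using gS w by force
          obtain w' b where y: "y = (False, w' @ [b])" using good_leaf[OF g r yS] by blast
          have ww: "w' = w" using yw y by simp
          show "x \<in> S"
          proof (cases "(False, w @ [True]) \<in> S")
            case True
            then show ?thesis using x w by (simp add: f_def)
          next
            case False
            then have "b = False" using yS y ww by (cases b) auto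
            then show ?thesis using x w False yS y ww by (simp add: f_def)
          qed
        qed
        show "S \<subseteq> Phi r f"
        proof
          fix x assume xS: "x \<in> S"
          obtain w b where x: "x = (False, w @ [b])" and w: "w \<in> Wd r" using good_leaf[OF g r xS] by blast
          have "b = f w"
          proof (cases b)
            case True
            then show ?thesis using xS x w by (simp add: f_def)
          next
            case False
            then have "(False, w @ [True]) \<notin> S" using good_sib[OF g w, of False] xS x by auto
            then show ?thesis using False w by (simp add: f_def)
          qed
          then show "x \<in> Phi r f" using x w unfolding Phi_def by blast
        qed
      qed
      then show "S \<in> Phi r ` (Wd r \<rightarrow>\<^sub>E UNIV)" using fP by blast
    qed
  qed
qed

lemma card_Mx:
  assumes r: "r \<ge> 1"
  shows "card (Mx r) = 2 ^ (2 ^ (r - 1))"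
proof -
  have "card (Mx r) = card (Wd r \<rightarrow>\<^sub>E (UNIV :: bool set))"
    using bij_betw_same_card[OF Mx_bij[OF r]] by simp
  also have "\<dots> = (\<Prod>i\<in>Wd r. card (UNIV :: bool set))" by (rule card_PiE[OF finite_Wd[OF r]])
  also have "\<dots> = 2 ^ card (Wd r)" by simp
  finally show ?thesis using card_Wd[OF r] by simp
qed
theorem mainTheorem5:
  fixes r :: nat
  assumes "r \<ge> 2"
  shows "mu_t (GT_V r) (GT_E r) = 2 ^ (r - 1)
       \<and> mu_d (GT_V r) (GT_E r) = 2 ^ (r - 1)
       \<and> card (mu_t_sets (GT_V r) (GT_E r)) = 2 ^ (2 ^ (r - 1))
       \<and> card (mu_d_sets (GT_V r) (GT_E r)) = 2 ^ (2 ^ (r - 1))"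
proof -
  have r1: "r \<ge> 1" using assms by simp
  have tg: "total_mutual_visibility_set (GT_V r) (GT_E r) S \<longleftrightarrow> good r S" for S
    using good_total[OF _ r1] total_dual dual_good[OF _ assms] by blast
  have dg: "dual_mutual_visibility_set (GT_V r) (GT_E r) S \<longleftrightarrow> good r S" for S
    using good_total[OF _ r1] total_dual dual_good[OF _ assms] by blast
  have C: "Max {card S | S. good r S} = 2 ^ (r - 1)"
  proof (rule Max_eqI)
    have "{card S | S. good r S} \<subseteq> {..2 ^ (r - 1)}" using good_card(2)[OF _ r1] by auto
    then show "finite {card S | S. good r S}" using finite_subset by blast
    show "y \<le> 2 ^ (r - 1)" if "y \<in> {card S | S. good r S}" for y using that good_card(2)[OF _ r1] by auto
    show "2 ^ (r - 1) \<in> {card S | S. good r S}" using Phi_good[OF r1, of "\<lambda>_. False"] by force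
  qed
  have mt: "mu_t (GT_V r) (GT_E r) = 2 ^ (r - 1)" unfolding mu_t_def using C by (simp add: tg)
  have md: "mu_d (GT_V r) (GT_E r) = 2 ^ (r - 1)" unfolding mu_d_def using C by (simp add: dg)
  have st: "mu_t_sets (GT_V r) (GT_E r) = Mx r" unfolding mu_t_sets_def Mx_def mt by (simp add: tg)
  have sd: "mu_d_sets (GT_V r) (GT_E r) = Mx r" unfolding mu_d_sets_def Mx_def md by (simp add: dg)
  show ?thesis using mt md st sd card_Mx[OF r1] by simp
qed

end
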